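(* Let $R \neq 0$ be a ring and let $n \geq 3$ be an integer. Then the full matrix ring ${\rm M}_n(R)$ is not a GSWNC ring.
   Context: All rings are associative with identity. An element $a$ of a ring $S$ is called strongly weakly nil-clean if there exist an idempotent $e \in S$ and a nilpotent $q \in S$ with $eq = qe$ such that $a = q + e$ or $a = q - e$. A ring $S$ is called GSWNC (generalized strongly weakly nil-clean) if every non-invertible element of $S$ is strongly weakly nil-clean. *)

theory Defs
  imports "Jordan_Normal_Form.Matrix"
begin

definition mat_idempotent :: "nat \<Rightarrow> 'a::ring_1 mat \<Rightarrow> bool" where
  "mat_idempotent n E \<longleftrightarrow> E \<in> carrier_mat n n \<and> E * E = E"

definition mat_nilpotent :: "nat \<Rightarrow> 'a::ring_1 mat \<Rightarrow> bool" where
  "mat_nilpotent n Q \<longleftrightarrow> Q \<in> carrier_mat n n \<and> (\<exists>k. Q ^\<^sub>m k = 0\<^sub>m n n)"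

definition mat_invertible :: "nat \<Rightarrow> 'a::ring_1 mat \<Rightarrow> bool" where
  "mat_invertible n A \<longleftrightarrow> A \<in> carrier_mat n n \<and>
     (\<exists>B \<in> carrier_mat n n. A * B = 1\<^sub>m n \<and> B * A = 1\<^sub>m n)"

definition mat_strongly_weakly_nil_clean :: "nat \<Rightarrow> 'a::ring_1 mat \<Rightarrow> bool" where
  "mat_strongly_weakly_nil_clean n A \<longleftrightarrow>
     (\<exists>E Q. mat_idempotent n E \<and> mat_nilpotent n Q \<and> E * Q = Q * E \<and>
            (A = Q + E \<or> A = Q - E))"

definition mat_GSWNC :: "'a::ring_1 itself \<Rightarrow> nat \<Rightarrow> bool" where
  "mat_GSWNC ty n \<longleftrightarrow>
     (\<forall>A :: 'a mat. A \<in> carrier_mat n n \<longrightarrow> \<not> mat_invertible n A \<longrightarrow>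
        mat_strongly_weakly_nil_clean n A)"

end

theory Submission
  imports Defs
begin

lemma ring_mat1: "ring (ring_mat TYPE('a :: ring_1) n b)"
  by (unfold_locales, insert add_inv_exists_mat, auto simp: ring_mat_def algebra_simps Units_def)

context ring begin
lemma key_plus:
  assumes a: "a \<in> carrier R" and e: "e \<in> carrier R" and q: "q \<in> carrier R"
    and ee: "e \<otimes> e = e" and eq: "e \<otimes> q = q \<otimes> e" and qk: "q [^] (k::nat) = \<zero>"
    and aq: "a = q \<oplus> e"
  shows "(a \<otimes> a \<ominus> a) [^] k = \<zero>"
proof -
  define w where "w = q \<oplus> e \<oplus> e \<ominus> \<one>"
  have w: "w \<in> carrier R" using q e by (simp add: w_def)
  have "a \<otimes> a \<ominus> a = q \<otimes> w"
    unfolding aq w_def using q e ee eq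
    by (simp add: l_distr r_distr r_minus l_minus minus_add a_ac minus_eq r_neg1 r_neg2)
  moreover have "q \<otimes> w = w \<otimes> q"
    unfolding w_def using q e eq
    by (simp add: l_distr r_distr r_minus l_minus minus_add a_ac minus_eq r_neg1 r_neg2)
  ultimately show ?thesis using pow_mult_distrib[of q w k] q w qk by simp
qed

lemma key_minus:
  assumes a: "a \<in> carrier R" and e: "e \<in> carrier R" and q: "q \<in> carrier R"
    and ee: "e \<otimes> e = e" and eq: "e \<otimes> q = q \<otimes> e" and qk: "q [^] (k::nat) = \<zero>"
    and aq: "a = q \<ominus> e"
  shows "(a \<otimes> a \<oplus> a) [^] k = \<zero>"
proof -
  define w where "w = q \<ominus> e \<ominus> e \<oplus> \<one>"
  have w: "w \<in> carrier R" using q e by (simp add: w_def)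
  have h: "\<And>y z. y \<in> carrier R \<Longrightarrow> z \<in> carrier R \<Longrightarrow> e \<oplus> (y \<oplus> (\<ominus> e \<oplus> z)) = y \<oplus> z"
    using e by (metis a_lcomm r_neg2 a_inv_closed add.m_closed)
  have "a \<otimes> a \<oplus> a = q \<otimes> w"
    unfolding aq w_def using q e ee eq
    by (simp add: h l_distr r_distr r_minus l_minus minus_add a_ac minus_eq r_neg1 r_neg2)
  moreover have "q \<otimes> w = w \<otimes> q"
    unfolding w_def using q e eq
    by (simp add: l_distr r_distr r_minus l_minus minus_add a_ac minus_eq r_neg1 r_neg2)
  ultimately show ?thesis using pow_mult_distrib[of q w k] q w qk by simp
qed

lemma not_nil:
  assumes x: "x \<in> carrier R" and b: "b \<in> carrier R" and bx: "b \<otimes> (x \<otimes> x) = x"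
    and x0: "x \<noteq> \<zero>" and one: "\<one> \<noteq> \<zero>"
  shows "x [^] (k::nat) \<noteq> \<zero>"
proof (induction k rule: nat_less_induct)
  case (1 k)
  show ?case
  proof (cases k)
    case 0 then show ?thesis using one by simp
  next
    case (Suc m)
    show ?thesis
    proof (cases m)
      case 0 then show ?thesis using Suc x x0 by simp
    next
      case (Suc j)
      have "x [^] k = (x \<otimes> x) \<otimes> x [^] j" using Suc \<open>k = Suc m\<close> x
        by (simp only: nat_pow_Suc2) (simp add: m_assoc)
      hence "b \<otimes> x [^] k = (b \<otimes> (x \<otimes> x)) \<otimes> x [^] j" using x b
        by (simp add: m_assoc)
      also have "\<dots> = x [^] m" using bx \<open>m = Suc j\<close> x by (simp only: nat_pow_Suc2)
      finally have "b \<otimes> x [^] k = x [^] m" .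
      moreover have "x [^] m \<noteq> \<zero>" using 1 \<open>k = Suc m\<close> by simp
      ultimately show ?thesis using b by auto
    qed
  qed
qed
end

definition blk :: "nat \<Rightarrow> 'a::ring_1 \<Rightarrow> 'a \<Rightarrow> 'a \<Rightarrow> 'a \<Rightarrow> 'a mat" where
  "blk n a b c d = mat n n (\<lambda>(i,j). if i = 0 \<and> j = 0 then a else if i = 0 \<and> j = 1 then b
     else if i = 1 \<and> j = 0 then c else if i = 1 \<and> j = 1 then d else 0)"

lemma blk_carrier[simp]: "blk n a b c d \<in> carrier_mat n n"
  by (simp add: blk_def)

lemma blk_dims[simp]: "dim_row (blk n a b c d) = n" "dim_col (blk n a b c d) = n"
  by (simp_all add: blk_def)

lemma blk_index: "i < n \<Longrightarrow> j < n \<Longrightarrow> blk n a b c d $$ (i,j) =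
  (if i = 0 \<and> j = 0 then a else if i = 0 \<and> j = 1 then b
     else if i = 1 \<and> j = 0 then c else if i = 1 \<and> j = 1 then d else 0)"
  by (simp add: blk_def)

lemma blk_mult:
  assumes n: "2 \<le> n"
  shows "blk n a b c d * blk n a' b' c' d' =
    blk n (a*a'+b*c') (a*b'+b*d') (c*a'+d*c') (c*b'+d*d')"
proof (rule eq_matI)
  fix i j assume i: "i < dim_row (blk n (a*a'+b*c') (a*b'+b*d') (c*a'+d*c') (c*b'+d*d'))"
    and j: "j < dim_col (blk n (a*a'+b*c') (a*b'+b*d') (c*a'+d*c') (c*b'+d*d'))"
  hence i: "i < n" and j: "j < n" by (auto simp: blk_def)
  define f where "f k = blk n a b c d $$ (i,k) * blk n a' b' c' d' $$ (k,j)" for k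
  have "(blk n a b c d * blk n a' b' c' d') $$ (i,j) = (\<Sum>k\<in>{0..<n}. f k)"
    using i j by (simp add: scalar_prod_def f_def blk_def)
  also have "\<dots> = (\<Sum>k\<in>{0..<2}. f k)"
    by (rule sum.mono_neutral_right) (use n i j in \<open>auto simp: f_def blk_index\<close>)
  also have "\<dots> = f 0 + f 1" by (simp add: numeral_2_eq_2)
  also have "\<dots> = blk n (a*a'+b*c') (a*b'+b*d') (c*a'+d*c') (c*b'+d*d') $$ (i,j)"
    using i j n by (auto simp: f_def blk_index)
  finally show "(blk n a b c d * blk n a' b' c' d') $$ (i,j) =
     blk n (a*a'+b*c') (a*b'+b*d') (c*a'+d*c') (c*b'+d*d') $$ (i,j)" .
qed (auto simp: blk_def)

lemma blk_add: "blk n a b c d + blk n a' b' c' d' = blk n (a+a') (b+b') (c+c') (d+d')"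
  by (rule eq_matI) (auto simp: blk_def)

lemma blk_minus: "blk n a b c d - blk n a' b' c' d' = blk n (a-a') (b-b') (c-c') (d-d')"
  by (rule eq_matI) (auto simp: blk_def)

lemma blk_nonzero: "1 \<le> n \<Longrightarrow> a \<noteq> 0 \<Longrightarrow> blk n a b c d \<noteq> 0\<^sub>m n n"
proof
  assume "1 \<le> n" "a \<noteq> 0" "blk n a b c d = 0\<^sub>m n n"
  hence "blk n a b c d $$ (0,0) = (0\<^sub>m n n :: 'a mat) $$ (0,0)" by simp
  thus False using \<open>1 \<le> n\<close> \<open>a \<noteq> 0\<close> by (simp add: blk_index)
qed

lemma blk_nonzero_d: "2 \<le> n \<Longrightarrow> d \<noteq> 0 \<Longrightarrow> blk n a b c d \<noteq> 0\<^sub>m n n"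
proof
  assume "2 \<le> n" "d \<noteq> 0" "blk n a b c d = 0\<^sub>m n n"
  hence "blk n a b c d $$ (1,1) = (0\<^sub>m n n :: 'a mat) $$ (1,1)" by simp
  thus False using \<open>2 \<le> n\<close> \<open>d \<noteq> 0\<close> by (simp add: blk_index)
qed

lemma blk_not_inv:
  assumes n: "3 \<le> n" and one: "(0::'a::ring_1) \<noteq> 1"
  shows "\<not> mat_invertible n (blk n (a::'a) b c d)"
proof
  assume "mat_invertible n (blk n a b c d)"
  then obtain B where B: "B \<in> carrier_mat n n" and AB: "blk n a b c d * B = 1\<^sub>m n"
    unfolding mat_invertible_def by blast
  have "(blk n a b c d * B) $$ (2,2) = 0"
  proof -
    have "(blk n a b c d * B) $$ (2,2) = (\<Sum>k\<in>{0..<n}. blk n a b c d $$ (2,k) * B $$ (k,2))"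
      using B n by (simp add: scalar_prod_def)
    also have "\<dots> = 0" using n by (auto simp: blk_index intro!: sum.neutral)
    finally show ?thesis .
  qed
  moreover have "(1\<^sub>m n :: 'a mat) $$ (2,2) = 1" using n by simp
  ultimately show False using AB one by simp
qed


theorem theorem2p25:
  assumes "(0::'a::ring_1) \<noteq> 1"
    and "n \<ge> 3"
  shows "\<not> mat_GSWNC TYPE('a) n"
proof
  assume G: "mat_GSWNC TYPE('a) n"
  define A where "A = blk n (1::'a) 1 1 0"
  have Ac: "A \<in> carrier_mat n n" by (simp add: A_def)
  have "mat_strongly_weakly_nil_clean n A"
    using G blk_not_inv[OF assms(2) assms(1)] Ac unfolding mat_GSWNC_def A_def by blast
  then obtain E Q where E: "mat_idempotent n E" and Q: "mat_nilpotent n Q"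
    and EQ: "E * Q = Q * E" and AQ: "A = Q + E \<or> A = Q - E"
    unfolding mat_strongly_weakly_nil_clean_def by blast
  have Ec: "E \<in> carrier_mat n n" and EE: "E * E = E" using E by (auto simp: mat_idempotent_def)
  obtain k where Qc: "Q \<in> carrier_mat n n" and Qk: "Q ^\<^sub>m k = 0\<^sub>m n n"
    using Q by (auto simp: mat_nilpotent_def)
  let ?R = "ring_mat TYPE('a) n ()"
  interpret R: ring ?R by (rule ring_mat1)
  have uminus: "\<ominus>\<^bsub>?R\<^esub> y = - y" if y: "y \<in> carrier_mat n n" for y
    by (rule R.minus_equality) (use y in \<open>auto simp: ring_mat_simps\<close>)
  have minus: "x \<ominus>\<^bsub>?R\<^esub> y = x - y" if x: "x \<in> carrier_mat n n" and y: "y \<in> carrier_mat n n" for x y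
    using x y by (simp add: a_minus_def uminus ring_mat_simps minus_add_uminus_mat[OF x y])
  have pw: "X ^\<^sub>m m = X [^]\<^bsub>?R\<^esub> m" if "X \<in> carrier_mat n n" for X m
    by (rule pow_mat_ring_pow[OF that])
  have n2: "2 \<le> n" and n1: "1 \<le> n" using assms(2) by auto
  have one: "\<one>\<^bsub>?R\<^esub> \<noteq> \<zero>\<^bsub>?R\<^esub>"
  proof
    assume "\<one>\<^bsub>?R\<^esub> = \<zero>\<^bsub>?R\<^esub>"
    hence "(1\<^sub>m n :: 'a mat) $$ (0,0) = (0\<^sub>m n n :: 'a mat) $$ (0,0)" by (simp add: ring_mat_simps)
    thus False using n1 assms(1) by simp
  qed
  have AA: "A * A = blk n 2 1 1 1" unfolding A_def by (simp add: blk_mult[OF n2])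
  from AQ show False
  proof
    assume AQ: "A = Q + E"
    have "(A \<otimes>\<^bsub>?R\<^esub> A \<ominus>\<^bsub>?R\<^esub> A) [^]\<^bsub>?R\<^esub> k = \<zero>\<^bsub>?R\<^esub>"
      by (rule R.key_plus[where e = E and q = Q])
        (use Ac Ec Qc EE EQ Qk pw[OF Qc] AQ in \<open>auto simp: ring_mat_simps\<close>)
    moreover have X: "A \<otimes>\<^bsub>?R\<^esub> A \<ominus>\<^bsub>?R\<^esub> A = blk n 1 0 0 1"
    proof -
      have "A \<otimes>\<^bsub>?R\<^esub> A \<ominus>\<^bsub>?R\<^esub> A = A * A - A"
        using Ac by (simp add: ring_mat_simps minus)
      also have "\<dots> = blk n 1 0 0 1" unfolding AA by (simp add: A_def blk_minus)
      finally show ?thesis .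
    qed
    moreover have "blk n (1::'a) 0 0 1 [^]\<^bsub>?R\<^esub> k \<noteq> \<zero>\<^bsub>?R\<^esub>"
      by (rule R.not_nil[OF _ _ _ _ one, of _ "blk n 1 0 0 1"])
        (use n1 n2 assms(1) in \<open>auto simp: ring_mat_simps blk_mult blk_nonzero\<close>)
    ultimately show False by simp
  next
    assume AQ: "A = Q - E"
    have "(A \<otimes>\<^bsub>?R\<^esub> A \<oplus>\<^bsub>?R\<^esub> A) [^]\<^bsub>?R\<^esub> k = \<zero>\<^bsub>?R\<^esub>"
      by (rule R.key_minus[where e = E and q = Q])
        (use Ac Ec Qc EE EQ Qk pw[OF Qc] AQ minus[OF Qc Ec] in \<open>auto simp: ring_mat_simps\<close>)
    moreover have X: "A \<otimes>\<^bsub>?R\<^esub> A \<oplus>\<^bsub>?R\<^esub> A = blk n 3 2 2 1"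
      using Ac unfolding ring_mat_simps AA by (simp add: A_def blk_add)
    moreover have "blk n (3::'a) 2 2 1 [^]\<^bsub>?R\<^esub> k \<noteq> \<zero>\<^bsub>?R\<^esub>"
      by (rule R.not_nil[OF _ _ _ _ one, of _ "blk n (-1) 2 2 (-3)"])
        (use n1 n2 assms(1) in \<open>auto simp: ring_mat_simps blk_mult blk_nonzero_d\<close>)
    ultimately show False by simp
  qed
qed

end
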